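(* Let $d\ge2$, let $\Omega\subset\mathbb R^d$ be a nonempty bounded open convex polytope, and let $E\subset\mathbb R^d$ be endowed with a Borel probability measure $\mu$ such that $(E,\mu)$ is weakly incoming to $\Omega$. Then there exist measurable subsets $F_1,\dots,F_d\subset E$ with $\mu(F_j)>0$ for all $j$ such that every $(f_1,\dots,f_d)\in\prod_{j=1}^dF_j$ spans $\mathbb R^d$. Moreover, the sets $F_j$ can be chosen with arbitrarily small diameters.
   Context: $\Omega=\{x\in\mathbb R^d:\ \ell_j(x)>b_j,\ j=1,\dots,m\}$ for linear forms $\ell_j$ and reals $b_j$. Define $\mathrm c:\mathbb R^d\to\mathbb N\cup\{+\infty\}$ by $\mathrm c(x)=0$ if $x\in\Omega$, $+\infty$ if $x\notin\overline\Omega$, $\#\{i:\ell_i(x)=b_i\}$ if $x\in\partial\Omega$. $(E,\mu)$ is weakly incoming to $\Omega$ if for every $x_0\in\partial\Omega$ there exist $\epsilon>0$, $\theta\in\{\pm1\}$ and a measurable $F\subset E$ with $\mu(F)>0$ such that $\mathrm c(x_0+\theta te)<\mathrm c(x_0)$ for all $t\in]0,\epsilon]$ and all $e\in F$. *)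

theory Defs
  imports "HOL-Probability.Probability"
begin

definition polytope :: "nat \<Rightarrow> (nat \<Rightarrow> real^'d) \<Rightarrow> (nat \<Rightarrow> real) \<Rightarrow> (real^'d) set" where
  "polytope m a b = {x. \<forall>j<m. a j \<bullet> x > b j}"

definition cfun :: "nat \<Rightarrow> (nat \<Rightarrow> real^'d) \<Rightarrow> (nat \<Rightarrow> real) \<Rightarrow> real^'d \<Rightarrow> enat" where
  "cfun m a b x =
     (if x \<in> polytope m a b then 0
      else if x \<notin> closure (polytope m a b) then \<infinity>
      else enat (card {i. i < m \<and> a i \<bullet> x = b i}))"

text \<open>(E, mu) is weakly incoming to Omega; E is the space of mu.\<close>
definition weakly_incoming :: "(real^'d) measure \<Rightarrow> nat \<Rightarrow> (nat \<Rightarrow> real^'d) \<Rightarrow> (nat \<Rightarrow> real) \<Rightarrow> bool" where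
  "weakly_incoming \<mu> m a b \<longleftrightarrow>
     (\<forall>x0 \<in> frontier (polytope m a b).
        \<exists>\<epsilon>>0. \<exists>\<theta>\<in>{-1, 1::real}. \<exists>F \<in> sets \<mu>. emeasure \<mu> F > 0 \<and>
          (\<forall>t\<in>{0<..\<epsilon>}. \<forall>e\<in>F. cfun m a b (x0 + (\<theta> * t) *\<^sub>R e) < cfun m a b x0))"

end

theory Submission
  imports Defs
begin

lemma cont_det: "continuous_on UNIV (det :: real^'n^'n \<Rightarrow> real)"
  unfolding det_def by (intro continuous_intros)

lemma rows_chi: "rows (\<chi> i. f i) = range f"
  by (auto simp: rows_def row_def vec_eq_iff)

lemma span_det: "span (range f) = UNIV \<longleftrightarrow> det (\<chi> i. (f i :: real^'n)) \<noteq> 0"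
  by (metis rows_chi matrix_left_invertible_span_rows invertible_det_nz invertible_left_inverse)

lemma hyper:
  fixes m :: nat and a :: "nat \<Rightarrow> real^'d" and b :: "nat \<Rightarrow> real"
    and E :: "(real^'d) set" and \<mu> :: "(real^'d) measure"
  assumes ne: "polytope m a b \<noteq> {}"
    and bd: "bounded (polytope m a b)"
    and sets: "sets \<mu> = sets (restrict_space borel E)"
    and sp: "space \<mu> = E"
    and wi: "weakly_incoming \<mu> m a b"
    and n0: "n \<noteq> 0"
  shows "emeasure \<mu> (E - {x. n \<bullet> x = 0}) \<noteq> 0"
proof
  assume contra: "emeasure \<mu> (E - {x. n \<bullet> x = 0}) = 0"
  define P where "P = polytope m a b"
  have cK: "compact (closure P)" using bd by (simp add: P_def compact_closure)
  have cne: "closure P \<noteq> {}" using ne by (simp add: P_def)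
  obtain x1 where x1: "x1 \<in> closure P" and mx: "\<forall>y\<in>closure P. n \<bullet> y \<le> n \<bullet> x1"
  proof -
    have "continuous_on (closure P) (\<lambda>x. n \<bullet> x)" by (intro continuous_intros)
    then show ?thesis using continuous_attains_sup[OF cK cne, of "\<lambda>x. n \<bullet> x"] that by blast
  qed
  define G where "G = {x\<in>closure P. n \<bullet> x = n \<bullet> x1}"
  define k where "k = (LEAST k. \<exists>x\<in>G. cfun m a b x = k)"
  have ex: "\<exists>x\<in>G. cfun m a b x = cfun m a b x1" using x1 by (auto simp: G_def)
  obtain x0 where x0G: "x0 \<in> G" and x0k: "cfun m a b x0 = k"
  proof -
    have "\<exists>k. \<exists>x\<in>G. cfun m a b x = k" using ex by blast
    from LeastI_ex[OF this] show ?thesis using that unfolding k_def by blast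
  qed
  have kmin: "\<And>y. y \<in> G \<Longrightarrow> k \<le> cfun m a b y"
    unfolding k_def by (rule Least_le) blast
  have x0c: "x0 \<in> closure P" and x0n: "n \<bullet> x0 = n \<bullet> x1" using x0G by (auto simp: G_def)
  have "x0 \<notin> interior P"
  proof
    assume "x0 \<in> interior P"
    then obtain e where e: "e > 0" "ball x0 e \<subseteq> P"
      by (meson mem_interior)
    define z where "z = x0 + (e / (2 * norm n)) *\<^sub>R n"
    have nn: "norm n > 0" using n0 by simp
    have "dist x0 z = e / 2" using nn e by (simp add: z_def dist_norm)
    then have "z \<in> P" using e by auto
    then have "z \<in> closure P" using closure_subset by blast
    moreover have "n \<bullet> z = n \<bullet> x0 + e * norm n / 2"
      using nn by (simp add: z_def inner_add_right power2_norm_eq_inner[symmetric] power2_eq_square)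
    ultimately have "n \<bullet> x0 + e * norm n / 2 \<le> n \<bullet> x0" using mx x0n by metis
    moreover have "e * norm n > 0" using e nn by simp
    ultimately show False by linarith
  qed
  then have "x0 \<in> frontier (polytope m a b)" using x0c by (simp add: frontier_def P_def)
  then obtain \<epsilon> \<theta> F where ep: "\<epsilon> > 0" and th: "\<theta> \<in> {-1, 1::real}" and F: "F \<in> sets \<mu>"
    and Fpos: "emeasure \<mu> F > 0"
    and dec: "\<forall>t\<in>{0<..\<epsilon>}. \<forall>e\<in>F. cfun m a b (x0 + (\<theta> * t) *\<^sub>R e) < cfun m a b x0"
    using wi unfolding weakly_incoming_def by blast
  have FE: "F \<subseteq> E" using sets.sets_into_space[OF F] sp by simp
  obtain e where eF: "e \<in> F" and en: "n \<bullet> e = 0"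
  proof (rule ccontr)
    assume "\<not> thesis"
    with that have "F \<subseteq> E - {x. n \<bullet> x = 0}" using FE by blast
    moreover have "E - {x. n \<bullet> x = 0} \<in> sets \<mu>"
      unfolding sets by (auto simp: sets_restrict_space intro!: closed_hyperplane)
    ultimately have "emeasure \<mu> F \<le> 0" using contra emeasure_mono by metis
    then show False using Fpos by simp
  qed
  define y where "y = x0 + (\<theta> * \<epsilon>) *\<^sub>R e"
  have lt: "cfun m a b y < cfun m a b x0" using dec ep eF by (simp add: y_def)
  have ny: "n \<bullet> y = n \<bullet> x0" using en by (simp add: y_def inner_add_right)
  show False
  proof (cases "y \<in> closure P")
    case True
    then have "y \<in> G" using ny x0n by (simp add: G_def)
    then show False using kmin lt x0k by (simp add: leD)
  next
    case False
    then have "y \<notin> P" using closure_subset by blast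
    with False have "cfun m a b y = \<infinity>" by (simp add: cfun_def P_def)
    then show False using lt by simp
  qed
qed

lemma support_null:
  fixes \<mu> :: "(real^'d) measure"
  assumes sets: "sets \<mu> = sets (restrict_space borel E)"
  shows "\<exists>N \<in> null_sets \<mu>. E - {x. \<forall>r>0. emeasure \<mu> (E \<inter> ball x r) > 0} \<subseteq> N"
proof -
  define \<F> where "\<F> = {ball x r | x r. r > 0 \<and> emeasure \<mu> (E \<inter> ball x r) = 0}"
  obtain \<F>' where F1: "\<F>' \<subseteq> \<F>" and F2: "countable \<F>'" and F3: "\<Union>\<F>' = \<Union>\<F>"
    by (rule Lindelof[of \<F>]) (auto simp: \<F>_def)
  have meas: "\<And>U. open U \<Longrightarrow> E \<inter> U \<in> sets \<mu>"
    unfolding sets by (auto simp: sets_restrict_space)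
  have N: "(\<Union>U\<in>\<F>'. E \<inter> U) \<in> null_sets \<mu>"
  proof (rule null_sets_UN')
    fix U assume "U \<in> \<F>'"
    then have "U \<in> \<F>" using F1 by blast
    then show "E \<inter> U \<in> null_sets \<mu>" using meas by (auto simp: \<F>_def)
  qed (rule F2)
  have "E - {x. \<forall>r>0. emeasure \<mu> (E \<inter> ball x r) > 0} \<subseteq> (\<Union>U\<in>\<F>'. E \<inter> U)"
  proof
    fix x assume "x \<in> E - {x. \<forall>r>0. emeasure \<mu> (E \<inter> ball x r) > 0}"
    then obtain r where x: "x \<in> E" "r > 0" "emeasure \<mu> (E \<inter> ball x r) = 0"
      by (auto simp: not_gr_zero)
    then have "ball x r \<in> \<F>" by (auto simp: \<F>_def)
    then have "x \<in> \<Union>\<F>" using x(2) by (metis UnionI centre_in_ball)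
    then have "x \<in> \<Union>\<F>'" using F3 by simp
    then show "x \<in> (\<Union>U\<in>\<F>'. E \<inter> U)" using x by auto
  qed
  then show ?thesis using N by blast
qed

theorem lemma5p2:
  fixes m :: nat and a :: "nat \<Rightarrow> real^'d" and b :: "nat \<Rightarrow> real"
    and E :: "(real^'d) set" and \<mu> :: "(real^'d) measure"
  assumes "CARD('d) \<ge> 2"
    and "polytope m a b \<noteq> {}"
    and "bounded (polytope m a b)"
    and "prob_space \<mu>"
    and "sets \<mu> = sets (restrict_space borel E)"
    and "space \<mu> = E"
    and "weakly_incoming \<mu> m a b"
  shows "(\<exists>F :: 'd \<Rightarrow> (real^'d) set.
            (\<forall>j. F j \<in> sets \<mu> \<and> emeasure \<mu> (F j) > 0) \<and>
            (\<forall>f. (\<forall>j. f j \<in> F j) \<longrightarrow> span (range f) = UNIV))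
       \<and> (\<forall>\<delta>>0. \<exists>F :: 'd \<Rightarrow> (real^'d) set.
            (\<forall>j. F j \<in> sets \<mu> \<and> emeasure \<mu> (F j) > 0 \<and> diameter (F j) < \<delta>) \<and>
            (\<forall>f. (\<forall>j. f j \<in> F j) \<longrightarrow> span (range f) = UNIV))"
proof -
  note sets = assms(5)
  define S where "S = {x. \<forall>r>0. emeasure \<mu> (E \<inter> ball x r) > 0}"
  obtain N where N: "N \<in> null_sets \<mu>" "E - S \<subseteq> N"
    using support_null[OF sets] unfolding S_def by blast
  have spS: "span S = UNIV"
  proof (rule ccontr)
    assume "span S \<noteq> UNIV"
    then have "dim S < DIM(real^'d)"
      using dim_subset_UNIV[of S] dim_eq_full[of S] by linarith
    then obtain n :: "real^'d" where n: "n \<noteq> 0" "\<And>y. y \<in> span S \<Longrightarrow> orthogonal n y"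
      using orthogonal_to_subspace_exists by blast
    have "S \<subseteq> {x. n \<bullet> x = 0}" using n(2) span_base by (fastforce simp: orthogonal_def)
    then have sub: "E - {x. n \<bullet> x = 0} \<subseteq> N" using N by blast
    have "E - {x. n \<bullet> x = 0} \<in> sets \<mu>"
      unfolding sets by (auto simp: sets_restrict_space intro!: closed_hyperplane)
    then have "E - {x. n \<bullet> x = 0} \<in> null_sets \<mu>" using null_sets_subset[OF N(1) _ sub] by blast
    then have "emeasure \<mu> (E - {x. n \<bullet> x = 0}) = 0" by auto
    with hyper[OF assms(2,3) sets assms(6,7) n(1)] show False by blast
  qed
  obtain B where B: "B \<subseteq> S" "independent B" "S \<subseteq> span B"
    by (rule maximal_independent_subset)
  have spB: "span B = UNIV"
    by (metis B(3) spS span_mono span_span top.extremum_uniqueI)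
  have cB: "card B = CARD('d)"
    using basis_card_eq_dim[of B UNIV] B(2) spB by (simp add: dim_UNIV)
  have fB: "finite B" using B(2) independent_imp_finite by blast
  obtain g where g: "bij_betw g (UNIV :: 'd set) B"
    using finite_same_card_bij[of "UNIV :: 'd set" B] fB cB by auto
  have rg: "range g = B" using g by (simp add: bij_betw_def)
  define M0 where "M0 = (\<chi> i. g i)"
  have d0: "det M0 \<noteq> 0" using span_det[of g] spB rg by (simp add: M0_def)
  obtain r where r: "r > 0" "\<And>A. dist A M0 < r \<Longrightarrow> dist (det A) (det M0) < \<bar>det M0\<bar>"
    using cont_det unfolding continuous_on_iff using d0 by (metis UNIV_I zero_less_abs_iff)
  have good: "span (range f) = UNIV" if f: "\<And>j. dist (f j) (g j) < r / CARD('d)" for f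
  proof -
    have "dist (\<chi> i. f i) M0 \<le> (\<Sum>i\<in>UNIV. norm ((\<chi> i. f i) $ i - M0 $ i))"
      unfolding dist_norm by (metis (no_types, lifting) L2_set_le_sum norm_ge_zero norm_vec_def sum.cong vector_minus_component)
    also have "\<dots> = (\<Sum>i\<in>UNIV. dist (f i) (g i))" by (simp add: M0_def dist_norm)
    also have "\<dots> < (\<Sum>i\<in>(UNIV::'d set). r / CARD('d))"
      by (rule sum_strict_mono) (auto simp: f)
    also have "\<dots> = r" by simp
    finally have "dist (det (\<chi> i. f i)) (det M0) < \<bar>det M0\<bar>" using r(2) by blast
    then have "det (\<chi> i. f i) \<noteq> 0" by (auto simp: dist_real_def)
    then show ?thesis using span_det by blast
  qed
  have second: "\<forall>\<delta>>0. \<exists>F :: 'd \<Rightarrow> (real^'d) set.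
            (\<forall>j. F j \<in> sets \<mu> \<and> emeasure \<mu> (F j) > 0 \<and> diameter (F j) < \<delta>) \<and>
            (\<forall>f. (\<forall>j. f j \<in> F j) \<longrightarrow> span (range f) = UNIV)"
  proof (intro allI impI)
    fix \<delta> :: real assume dp: "\<delta> > 0"
    define \<rho> where "\<rho> = min (r / CARD('d)) (\<delta> / 3)"
    have rp: "\<rho> > 0" using dp r(1) by (simp add: \<rho>_def)
    define F where "F j = E \<inter> ball (g j) \<rho>" for j
    show "\<exists>F :: 'd \<Rightarrow> (real^'d) set.
            (\<forall>j. F j \<in> sets \<mu> \<and> emeasure \<mu> (F j) > 0 \<and> diameter (F j) < \<delta>) \<and>
            (\<forall>f. (\<forall>j. f j \<in> F j) \<longrightarrow> span (range f) = UNIV)"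
    proof (intro exI conjI allI impI)
      fix j
      show "F j \<in> sets \<mu>" unfolding F_def sets by (auto simp: sets_restrict_space)
      have "g j \<in> S" using rg B(1) by blast
      then show "emeasure \<mu> (F j) > 0" using rp by (simp add: S_def F_def)
      have "diameter (F j) \<le> 2 * \<rho>"
      proof (rule diameter_le)
        show "F j \<noteq> {} \<or> 0 \<le> 2 * \<rho>" using rp by simp
        fix x y assume "x \<in> F j" "y \<in> F j"
        then have "dist (g j) x < \<rho>" "dist (g j) y < \<rho>" by (auto simp: F_def)
        then show "norm (x - y) \<le> 2 * \<rho>"
          using dist_triangle[of x y "g j"] by (simp add: dist_norm norm_minus_commute)
      qed
      also have "\<dots> < \<delta>" using dp by (simp add: \<rho>_def)
      finally show "diameter (F j) < \<delta>" .
    next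
      fix f assume "\<forall>j. f j \<in> F j"
      then have "\<And>j. dist (f j) (g j) < r / CARD('d)"
        by (auto simp: F_def \<rho>_def dist_commute)
      then show "span (range f) = UNIV" by (rule good)
    qed
  qed
  have "\<exists>F :: 'd \<Rightarrow> (real^'d) set.
            (\<forall>j. F j \<in> sets \<mu> \<and> emeasure \<mu> (F j) > 0) \<and>
            (\<forall>f. (\<forall>j. f j \<in> F j) \<longrightarrow> span (range f) = UNIV)"
    using second[rule_format, of 1] by auto
  with second show ?thesis by blast
qed

end
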